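(* Let $i\in\mathbb Z_{\ge0}$, $J\in\mathbb Z_{>0}$, $j\in\mathbb Z$. If $j<0$ or $j>J$ then $W_J(i,j;i+j,0\mid v,\lambda)=0$. If $0\le j\le J$ then $$W_J(i,j;i+j,0\mid v,\lambda)=f(2\eta)^j\frac{[2\eta J]_J}{[2\eta(J-j)]_{J-j}[2\eta j]_j}\frac{[\lambda+2\eta(i+j)]_{J-j}}{[\eta\Lambda-v]_J}\cdot\frac{[v+\lambda+2\eta(i+2j-1)-\eta\Lambda]_j\,[\eta\Lambda-2\eta(i+j)-v]_{J-j}}{[\lambda+2\eta j]_{J-j}\,[\lambda+2\eta(2j-J-1)]_j}.$$
   Context: Fix $\eta,\tau\in\mathbb C$, $\operatorname{Im}\tau>0$. $f(z)$ denotes either $\theta(z)=-\sum_{j\in\mathbb Z}\exp\big(\pi\mathbf i\tau(j+\tfrac12)^2+2\pi\mathbf i(j+\tfrac12)(z+\tfrac12)\big)$ or $\sin(\pi z)$. Elliptic Pochhammer: $[a]_k=\prod_{m=0}^{k-1}f(a-2\eta m)$ for $k\ge0$, $[a]_k=\prod_{m=1}^{-k}f(a+2\eta m)^{-1}$ for $k<0$. Unfused weights ($k\ge0$): $W_1(k,0;k,0\mid v,\lambda,\Lambda)=\frac{f(\eta(\Lambda-2k)-v)f(\lambda+2k\eta)}{f(\eta\Lambda-v)f(\lambda)}$, $W_1(k,1;k+1,0\mid\cdot)=\frac{f(v+\lambda+\eta(2k+2-\Lambda))f(2\eta)}{f(\eta\Lambda-v)f(\lambda)}$, $W_1(k,0;k-1,1\mid\cdot)=\frac{f(\lambda-v+\eta(2k-2-\Lambda))f(2\eta(\Lambda+1-k))f(2k\eta)}{f(\eta\Lambda-v)f(\lambda)f(2\eta)}$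 ($k\ge1$), $W_1(k,1;k,1\mid\cdot)=\frac{f(\eta(2k-\Lambda)-v)f(\lambda+2\eta(k-\Lambda))}{f(\eta\Lambda-v)f(\lambda)}$, and $0$ otherwise. Column weights: for $\mathcal J_1=(j_{1,k})_{k=1}^J,\mathcal J_2=(j_{2,k})_{k=1}^J\in\{0,1\}^J$, $i^{(1)}=i_1$, $i^{(k+1)}=i^{(k)}+j_{1,k}-j_{2,k}$, $\Phi_J=\lambda$, $\Phi_k=\Phi_{k+1}\mp2\eta$ according as $j_{1,k+1}=0$ or $1$; $W_J(i_1,\mathcal J_1;i_2,\mathcal J_2\mid v,\lambda)=\prod_{k=1}^JW_1(i^{(k)},j_{1,k};i^{(k+1)},j_{2,k}\mid v+2\eta(k-1),\Phi_k,\Lambda)$ if all $i^{(k)}\ge0$ and $i^{(J+1)}=i_2$, else $0$. Fused weight: $W_J(i_1,j_1;i_2,j_2\mid v,\lambda)=\sum_{|\mathcal J_1|=j_1}W_J(i_1,\mathcal J_1;i_2,\mathcal K\mid v,\lambda)$ for any $\mathcal K$ with $|\mathcal K|=j_2$ (independent of $\mathcal K$); $\Lambda$ is suppressed. *)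

theory Defs
  imports "HOL-Analysis.Analysis"
begin

definition theta :: "complex \<Rightarrow> complex \<Rightarrow> complex" where
  "theta \<tau> z = - infsum (\<lambda>j::int. exp (pi * \<i> * \<tau> * (of_int j + 1/2)^2
                     + 2 * pi * \<i> * (of_int j + 1/2) * (z + 1/2))) UNIV"

definition epoch :: "(complex \<Rightarrow> complex) \<Rightarrow> complex \<Rightarrow> complex \<Rightarrow> int \<Rightarrow> complex" where
  "epoch f \<eta> a k =
     (if k \<ge> 0 then (\<Prod>m<nat k. f (a - 2 * \<eta> * of_nat m))
      else (\<Prod>m\<in>{1..nat (-k)}. inverse (f (a + 2 * \<eta> * of_nat m))))"

definition W1 :: "(complex \<Rightarrow> complex) \<Rightarrow> complex \<Rightarrow> complex \<Rightarrow>
    int \<Rightarrow> nat \<Rightarrow> int \<Rightarrow> nat \<Rightarrow> complex \<Rightarrow> complex \<Rightarrow> complex" where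
  "W1 f \<eta> Lam k j1 k2 j2 v lam =
    (let kk = (of_int k :: complex); D = f (\<eta> * Lam - v) * f lam in
     if k \<ge> 0 then
       (if j1 = 0 \<and> k2 = k \<and> j2 = 0 then
          f (\<eta> * (Lam - 2 * kk) - v) * f (lam + 2 * kk * \<eta>) / D
        else if j1 = 1 \<and> k2 = k + 1 \<and> j2 = 0 then
          f (v + lam + \<eta> * (2 * kk + 2 - Lam)) * f (2 * \<eta>) / D
        else if j1 = 0 \<and> k2 = k - 1 \<and> j2 = 1 \<and> k \<ge> 1 then
          f (lam - v + \<eta> * (2 * kk - 2 - Lam)) * f (2 * \<eta> * (Lam + 1 - kk)) * f (2 * kk * \<eta>)
            / (D * f (2 * \<eta>))
        else if j1 = 1 \<and> k2 = k \<and> j2 = 1 then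
          f (\<eta> * (2 * kk - Lam) - v) * f (lam + 2 * \<eta> * (kk - Lam)) / D
        else 0)
     else 0)"

text \<open>Column data, 0-indexed: istate i1 A B n is i^(n+1) of the paper,
  Phi eta lam J A n is Phi_(n+1) of the paper (A = J_1, B = J_2 as lists).\<close>
definition istate :: "int \<Rightarrow> nat list \<Rightarrow> nat list \<Rightarrow> nat \<Rightarrow> int" where
  "istate i1 A B n = i1 + (\<Sum>m<n. int (A ! m) - int (B ! m))"

definition Phi :: "complex \<Rightarrow> complex \<Rightarrow> nat \<Rightarrow> nat list \<Rightarrow> nat \<Rightarrow> complex" where
  "Phi \<eta> lam J A n = lam + (\<Sum>m\<in>{n+1..<J}. (if A ! m = 0 then - 2 * \<eta> else 2 * \<eta>))"

definition Wcol :: "(complex \<Rightarrow> complex) \<Rightarrow> complex \<Rightarrow> complex \<Rightarrow> nat \<Rightarrow>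
    int \<Rightarrow> nat list \<Rightarrow> int \<Rightarrow> nat list \<Rightarrow> complex \<Rightarrow> complex \<Rightarrow> complex" where
  "Wcol f \<eta> Lam J i1 A i2 B v lam =
    (if (\<forall>n\<le>J. istate i1 A B n \<ge> 0) \<and> istate i1 A B J = i2 then
       (\<Prod>n<J. W1 f \<eta> Lam (istate i1 A B n) (A ! n) (istate i1 A B (Suc n)) (B ! n)
                 (v + 2 * \<eta> * of_nat n) (Phi \<eta> lam J A n))
     else 0)"

definition bseqs :: "nat \<Rightarrow> int \<Rightarrow> nat list set" where
  "bseqs J s = {xs. length xs = J \<and> set xs \<subseteq> {0, 1} \<and> int (sum_list xs) = s}"

text \<open>A fixed representative K with |K| = j2 (the fused weight is independent of the choice).\<close>
definition Kstd :: "nat \<Rightarrow> int \<Rightarrow> nat list" where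
  "Kstd J j2 = replicate (J - nat j2) 0 @ replicate (nat j2) 1"

definition Wfused :: "(complex \<Rightarrow> complex) \<Rightarrow> complex \<Rightarrow> complex \<Rightarrow> nat \<Rightarrow>
    int \<Rightarrow> int \<Rightarrow> int \<Rightarrow> int \<Rightarrow> complex \<Rightarrow> complex \<Rightarrow> complex" where
  "Wfused f \<eta> Lam J i1 j1 i2 j2 v lam =
    (\<Sum>A\<in>bseqs J j1. Wcol f \<eta> Lam J i1 A i2 (Kstd J j2) v lam)"

end

theory Submission
  imports Defs
begin

lemma gauss_nat:
  fixes c b d :: real assumes c: "c < 0"
  shows "summable (\<lambda>m::nat. exp (c*(real m)^2 + b* real m + d))"
proof (rule summable_comparison_test')
  show "summable (\<lambda>m::nat. exp d * exp (-1) ^ m)"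
    by (intro summable_mult summable_geometric) auto
  define N where "N = nat \<lceil>\<bar>b+1\<bar> / (-c)\<rceil>"
  show "norm (exp (c*(real m)^2 + b* real m + d)) \<le> exp d * exp (-1) ^ m" if "m \<ge> N" for m
  proof -
    have "real m \<ge> \<bar>b+1\<bar> / (-c)" using that unfolding N_def by linarith
    hence "(-c) * real m \<ge> \<bar>b+1\<bar>" using c by (simp add: field_simps)
    hence "c * real m + (b+1) \<le> 0" by linarith
    hence "real m * (c * real m + (b+1)) \<le> 0" by (simp add: mult_nonneg_nonpos)
    hence "c*(real m)^2 + b* real m + d \<le> d - real m" by (simp add: algebra_simps power2_eq_square)
    hence "exp (c*(real m)^2 + b* real m + d) \<le> exp (d - real m)" by simp
    also have "\<dots> = exp d * exp (-1) ^ m" by (simp add: exp_diff exp_minus exp_of_nat_mult[symmetric] field_simps)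
    finally show ?thesis by simp
  qed
qed

lemma gauss_int_real:
  fixes c b d :: real assumes c: "c < 0"
  shows "(\<lambda>n::int. exp (c*(of_int n)^2 + b* of_int n + d)) summable_on UNIV"
proof -
  define G where "G = (\<lambda>n::int. exp (c*(of_int n)^2 + b* of_int n + d))"
  have U: "(UNIV::int set) = range int \<union> range (\<lambda>m. - int m - 1)"
  proof -
    have "x \<in> range int \<union> range (\<lambda>m. - int m - 1)" for x :: int
    proof (cases "x \<ge> 0")
      case True then show ?thesis by (metis UnI1 nonneg_int_cases rangeI)
    next
      case False then have "x = - int (nat (-x-1)) - 1" by simp
      then show ?thesis by blast
    qed
    then show ?thesis by blast
  qed
  have s1: "G summable_on range int"
  proof -
    have "summable (\<lambda>m::nat. exp (c*(real m)^2 + b* real m + d))" by (rule gauss_nat[OF c])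
    hence "(G \<circ> int) summable_on UNIV"
      by (subst summable_on_UNIV_nonneg_real_iff) (auto simp: G_def o_def)
    thus ?thesis by (subst summable_on_reindex) (auto)
  qed
  have s2: "G summable_on range (\<lambda>m. - int m - 1)"
  proof -
    have "summable (\<lambda>m::nat. exp (c*(real m)^2 + (2*c-b)* real m + (c-b+d)))" by (rule gauss_nat[OF c])
    moreover have "(c*(real m)^2 + (2*c-b)* real m + (c-b+d)) = c*(of_int (- int m - 1))^2 + b* of_int (- int m - 1) + d" for m
      by (simp add: algebra_simps power2_eq_square)
    ultimately have "(G \<circ> (\<lambda>m. - int m - 1)) summable_on UNIV"
      by (subst summable_on_UNIV_nonneg_real_iff) (auto simp: G_def o_def)
    thus ?thesis by (subst summable_on_reindex) (auto simp: inj_on_def)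
  qed
  show ?thesis using summable_on_union[OF s1 s2] U unfolding G_def by simp
qed

lemma gauss_int:
  fixes c b d :: real and g :: "int \<Rightarrow> complex" assumes c: "c < 0"
    and bd: "\<And>n. norm (g n) \<le> exp (c*(of_int n)^2 + b* of_int n + d)"
  shows "g summable_on UNIV"
proof -
  have "(\<lambda>n. norm (g n)) summable_on UNIV"
    by (rule summable_on_comparison_test[OF gauss_int_real[OF c]]) (use bd in auto)
  thus ?thesis using summable_on_iff_abs_summable_on_complex by blast
qed


lemma prod_infsum:
  fixes f g :: "'a \<Rightarrow> complex"
  assumes "countable A" "countable B" "f summable_on A" "g summable_on B"
  shows "(\<lambda>(x,y). f x * g y) summable_on A \<times> B"
    and "infsum (\<lambda>(x,y). f x * g y) (A \<times> B) = infsum f A * infsum g B"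
proof -
  have fa: "Infinite_Set_Sum.abs_summable_on f A" using assms(3) summable_on_iff_abs_summable_on_complex abs_summable_equivalent by blast
  have ga: "Infinite_Set_Sum.abs_summable_on g B" using assms(4) summable_on_iff_abs_summable_on_complex abs_summable_equivalent by blast
  have pa: "Infinite_Set_Sum.abs_summable_on (\<lambda>(x,y). f x * g y) (A \<times> B)"
    by (rule abs_summable_on_product[OF assms(1,2) fa ga])
  then show "(\<lambda>(x,y). f x * g y) summable_on A \<times> B"
    using summable_on_iff_abs_summable_on_complex abs_summable_equivalent by blast
  show "infsum (\<lambda>(x,y). f x * g y) (A \<times> B) = infsum f A * infsum g B"
    using infsetsum_product[OF assms(1,2) fa ga] infsetsum_infsum[OF pa] infsetsum_infsum[OF fa]
      infsetsum_infsum[OF ga] by simp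
qed

definition gt :: "complex \<Rightarrow> real \<Rightarrow> complex \<Rightarrow> int \<Rightarrow> complex" where
  "gt \<alpha> s w n = exp (pi * \<i> * \<alpha> * (of_int n + of_real s)^2 + 2 * pi * \<i> * (of_int n + of_real s) * w)"

lemma gt_summable:
  assumes "Im \<alpha> > 0" shows "gt \<alpha> s w summable_on UNIV"
proof (rule gauss_int[where c = "- pi * Im \<alpha>" and b = "- 2 * pi * Im \<alpha> * s - 2 * pi * Im w"
      and d = "- pi * Im \<alpha> * s^2 - 2 * pi * s * Im w"])
  show "- pi * Im \<alpha> < 0" using assms by (simp add: pi_gt_zero)
  fix n :: int
  have e: "(of_int n + complex_of_real s) = complex_of_real (of_int n + s)" by simp
  show "norm (gt \<alpha> s w n) \<le> exp (- pi * Im \<alpha> * (of_int n)^2 + (- 2 * pi * Im \<alpha> * s - 2 * pi * Im w) * of_int n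
      + (- pi * Im \<alpha> * s^2 - 2 * pi * s * Im w))"
    unfolding gt_def norm_exp_eq_Re e
    by (simp add: power2_eq_square algebra_simps)
qed


lemma theta_gt: "theta \<tau> z = - infsum (gt \<tau> (1/2) (z + 1/2)) UNIV"
  unfolding theta_def gt_def by simp

lemma h1_eq:
  "gt \<tau> (1/2) (x + y + 1/2) (m + l) * gt \<tau> (1/2) (x - y + 1/2) (m - l - 1)
   = gt (2*\<tau>) 0 (2*x) m * gt (2*\<tau>) (1/2) (2*y) l"
proof -
  have "gt \<tau> (1/2) (x + y + 1/2) (m + l) * gt \<tau> (1/2) (x - y + 1/2) (m - l - 1)
      = exp ((pi * \<i> * (2*\<tau>) * (of_int m + of_real 0)^2 + 2 * pi * \<i> * (of_int m + of_real 0) * (2*x)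
        + (pi * \<i> * (2*\<tau>) * (of_int l + of_real (1/2))^2 + 2 * pi * \<i> * (of_int l + of_real (1/2)) * (2*y)))
         + \<i> * (of_int m * (of_real pi * 2)))"
    unfolding gt_def exp_add[symmetric]
    by (rule arg_cong[where f=exp]) (simp add: algebra_simps power2_eq_square)
  also have "\<dots> = gt (2*\<tau>) 0 (2*x) m * gt (2*\<tau>) (1/2) (2*y) l"
    unfolding exp_plus_2pin gt_def exp_add by simp
  finally show ?thesis .
qed

lemma h2_eq:
  "gt \<tau> (1/2) (x + y + 1/2) (m + l) * gt \<tau> (1/2) (x - y + 1/2) (m - l)
   = - (gt (2*\<tau>) (1/2) (2*x) m * gt (2*\<tau>) 0 (2*y) l)"
proof -
  have "gt \<tau> (1/2) (x + y + 1/2) (m + l) * gt \<tau> (1/2) (x - y + 1/2) (m - l)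
      = exp (((pi * \<i> * (2*\<tau>) * (of_int m + of_real (1/2))^2 + 2 * pi * \<i> * (of_int m + of_real (1/2)) * (2*x)
        + (pi * \<i> * (2*\<tau>) * (of_int l + of_real 0)^2 + 2 * pi * \<i> * (of_int l + of_real 0) * (2*y)))
         + \<i> * (of_int m * (of_real pi * 2))) + of_real pi * \<i>)"
    unfolding gt_def exp_add[symmetric]
    by (rule arg_cong[where f=exp]) (simp add: algebra_simps power2_eq_square)
  also have "\<dots> = - (gt (2*\<tau>) (1/2) (2*x) m * gt (2*\<tau>) 0 (2*y) l)"
    unfolding exp_add[of _ "of_real pi * \<i>"] exp_plus_2pin exp_pi_i unfolding gt_def exp_add by simp
  finally show ?thesis .
qed


lemma theta_prod:
  assumes tau: "Im \<tau> > 0"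
  shows "theta \<tau> (x + y) * theta \<tau> (x - y)
    = infsum (gt (2*\<tau>) 0 (2*x)) UNIV * infsum (gt (2*\<tau>) (1/2) (2*y)) UNIV
    - infsum (gt (2*\<tau>) (1/2) (2*x)) UNIV * infsum (gt (2*\<tau>) 0 (2*y)) UNIV"
proof -
  have tau2: "Im (2*\<tau>) > 0" using tau by simp
  define T where "T = (\<lambda>(j,k). gt \<tau> (1/2) (x + y + 1/2) j * gt \<tau> (1/2) (x - y + 1/2) k)"
  have sT: "T summable_on UNIV \<times> UNIV"
    unfolding T_def by (rule prod_infsum(1)) (auto intro: gt_summable tau)
  have eT: "infsum T (UNIV \<times> UNIV) = theta \<tau> (x + y) * theta \<tau> (x - y)"
    unfolding T_def theta_gt
    by (subst prod_infsum(2)) (auto intro: gt_summable tau simp: add.assoc add_diff_eq diff_add_eq)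
  define h1 where "h1 = (\<lambda>(m::int,l::int). (m + l, m - l - 1))"
  define h2 where "h2 = (\<lambda>(m::int,l::int). (m + l, m - l))"
  have inj1: "inj_on h1 UNIV" unfolding h1_def inj_on_def by auto
  have inj2: "inj_on h2 UNIV" unfolding h2_def inj_on_def by auto
  have U: "(UNIV :: (int \<times> int) set) = h1 ` UNIV \<union> h2 ` UNIV"
  proof -
    have "p \<in> h1 ` UNIV \<union> h2 ` UNIV" for p :: "int \<times> int"
    proof (cases p)
      case (Pair j k)
      show ?thesis
      proof (cases "even (j + k)")
        case True
        then obtain m where m: "j + k = 2*m" using evenE by blast
        have "h2 (m, j - m) = (j, k)" unfolding h2_def using m by simp
        then show ?thesis using Pair by (metis UnI2 rangeI)
      next
        case False
        then obtain m where m: "j + k + 1 = 2*m" by (metis even_plus_one_iff evenE)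
        have "h1 (m, j - m) = (j, k)" unfolding h1_def using m by simp
        then show ?thesis using Pair by (metis UnI1 rangeI)
      qed
    qed
    then show ?thesis by auto
  qed
  have disj: "h1 ` UNIV \<inter> h2 ` UNIV = {}"
  proof -
    have "h1 a \<noteq> h2 b" for a b
    proof -
      obtain m l m' l' where ab: "a = (m,l)" "b = (m',l')" by fastforce
      have "odd (fst (h1 a) + snd (h1 a))" unfolding ab h1_def by simp
      moreover have "even (fst (h2 b) + snd (h2 b))" unfolding ab h2_def by simp
      ultimately show ?thesis by metis
    qed
    then show ?thesis by blast
  qed
  have s1: "T summable_on h1 ` UNIV" by (rule summable_on_subset_banach[OF sT]) auto
  have s2: "T summable_on h2 ` UNIV" by (rule summable_on_subset_banach[OF sT]) auto
  have "infsum T (UNIV \<times> UNIV) = infsum T (h1 ` UNIV) + infsum T (h2 ` UNIV)"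
    using infsum_Un_disjoint[OF s1 s2 disj] U by simp
  also have "infsum T (h1 ` UNIV) = infsum (T \<circ> h1) UNIV" by (rule infsum_reindex[OF inj1])
  also have "T \<circ> h1 = (\<lambda>(m,l). gt (2*\<tau>) 0 (2*x) m * gt (2*\<tau>) (1/2) (2*y) l)"
    unfolding T_def h1_def by (auto simp: h1_eq)
  also have "infsum \<dots> UNIV = infsum (gt (2*\<tau>) 0 (2*x)) UNIV * infsum (gt (2*\<tau>) (1/2) (2*y)) UNIV"
    using prod_infsum(2)[of UNIV UNIV "gt (2*\<tau>) 0 (2*x)" "gt (2*\<tau>) (1/2) (2*y)"]
    by (simp add: gt_summable[OF tau2])
  also have "infsum T (h2 ` UNIV) = infsum (T \<circ> h2) UNIV" by (rule infsum_reindex[OF inj2])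
  also have "T \<circ> h2 = (\<lambda>p. - (\<lambda>(m,l). gt (2*\<tau>) (1/2) (2*x) m * gt (2*\<tau>) 0 (2*y) l) p)"
    unfolding T_def h2_def by (auto simp: h2_eq)
  also have "infsum \<dots> UNIV = - (infsum (gt (2*\<tau>) (1/2) (2*x)) UNIV * infsum (gt (2*\<tau>) 0 (2*y)) UNIV)"
    using prod_infsum(2)[of UNIV UNIV "gt (2*\<tau>) (1/2) (2*x)" "gt (2*\<tau>) 0 (2*y)"]
    by (simp add: gt_summable[OF tau2] infsum_uminus)
  finally show ?thesis using eT by simp
qed

lemma theta_odd:
  shows "theta \<tau> (- z) = - theta \<tau> z"
proof -
  have b: "bij_betw (\<lambda>j::int. - 1 - j) UNIV UNIV"
    by (rule bij_betwI[where g = "\<lambda>j::int. - 1 - j"]) auto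
  have e: "gt \<tau> (1/2) (- z + 1/2) (- 1 - j) = - gt \<tau> (1/2) (z + 1/2) j" for j
  proof -
    have "gt \<tau> (1/2) (- z + 1/2) (- 1 - j) = exp ((pi * \<i> * \<tau> * (of_int j + of_real (1/2))^2 + 2 * pi * \<i> * (of_int j + of_real (1/2)) * (z + 1/2)
       + \<i> * (of_int (-j-1) * (of_real pi * 2))) + of_real pi * \<i>)"
      unfolding gt_def by (rule arg_cong[where f=exp]) (simp add: algebra_simps power2_eq_square)
    also have "\<dots> = - gt \<tau> (1/2) (z + 1/2) j"
      unfolding exp_add[of _ "of_real pi * \<i>"] exp_plus_2pin exp_pi_i gt_def by simp
    finally show ?thesis .
  qed
  have "infsum (gt \<tau> (1/2) (- z + 1/2)) UNIV = infsum (\<lambda>j. gt \<tau> (1/2) (- z + 1/2) (- 1 - j)) UNIV"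
    by (rule infsum_reindex_bij_betw[OF b, symmetric])
  also have "\<dots> = - infsum (gt \<tau> (1/2) (z + 1/2)) UNIV" by (simp only: e infsum_uminus)
  finally show ?thesis unfolding theta_gt by simp
qed


definition good :: "(complex \<Rightarrow> complex) \<Rightarrow> bool" where
  "good f \<longleftrightarrow> (\<exists>P Q. \<forall>x y. f (x + y) * f (x - y) = P x * Q y - Q x * P y) \<and> (\<forall>z. f (- z) = - f z)"

lemma good_theta: assumes "Im \<tau> > 0" shows "good (theta \<tau>)"
  unfolding good_def
proof (intro conjI allI exI)
  fix x y show "theta \<tau> (x + y) * theta \<tau> (x - y) =
     (\<lambda>x. infsum (gt (2*\<tau>) 0 (2*x)) UNIV) x * (\<lambda>y. infsum (gt (2*\<tau>) (1/2) (2*y)) UNIV) y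
   - (\<lambda>y. infsum (gt (2*\<tau>) (1/2) (2*y)) UNIV) x * (\<lambda>x. infsum (gt (2*\<tau>) 0 (2*x)) UNIV) y"
    using theta_prod[OF assms] by simp
qed (rule theta_odd)

lemma good_sin: "good (\<lambda>z::complex. sin (complex_of_real pi * z))"
  unfolding good_def
proof (intro conjI exI allI)
  fix x y :: complex
  let ?a = "complex_of_real pi * x" and ?b = "complex_of_real pi * y"
  have "sin (complex_of_real pi * (x + y)) * sin (complex_of_real pi * (x - y))
      = sin (?a + ?b) * sin (?a - ?b)" by (simp add: algebra_simps)
  also have "\<dots> = (sin ?a * cos ?b)^2 - (cos ?a * sin ?b)^2"
    unfolding sin_add sin_diff by (simp add: algebra_simps power2_eq_square)
  also have "\<dots> = (sin ?a)^2 * 1 - 1 * (sin ?b)^2"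
    unfolding power_mult_distrib cos_squared_eq by (simp add: algebra_simps)
  finally show "sin (complex_of_real pi * (x + y)) * sin (complex_of_real pi * (x - y))
      = (\<lambda>x. (sin (complex_of_real pi * x))^2) x * (\<lambda>_. 1) y - (\<lambda>_. 1) x * (\<lambda>x. (sin (complex_of_real pi * x))^2) y"
    by simp
next
  fix z :: complex show "sin (complex_of_real pi * - z) = - sin (complex_of_real pi * z)" by simp
qed

lemma three_term:
  assumes "good f"
  shows "f (x1+x3) * f (x1-x3) * (f (x2+x4) * f (x2-x4)) + f (x1+x2) * f (x1-x2) * (f (x4+x3) * f (x4-x3))
       = f (x1+x4) * f (x1-x4) * (f (x2+x3) * f (x2-x3))"
proof -
  obtain P Q where PQ: "\<And>x y. f (x + y) * f (x - y) = P x * Q y - Q x * P y"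
    using assms unfolding good_def by blast
  show ?thesis unfolding PQ by (simp add: algebra_simps)
qed


lemma alg_main:
  fixes Fa FaK Far1 Fan Fc Fln FlnK Fl2nK Fl0 Fl1 FA FB FC FD FE FF FG \<alpha> \<beta> \<gamma> \<delta> e1 e2 P1 g h G1 H2 :: complex
  assumes nz: "Far1 \<noteq> 0" "e1 \<noteq> 0" "Fan \<noteq> 0" "e2 \<noteq> 0" "Fc \<noteq> 0" "P1 \<noteq> 0" "Fln \<noteq> 0" "g \<noteq> 0" "h \<noteq> 0"
     "FlnK \<noteq> 0" "Fl0 \<noteq> 0" "Fl1 \<noteq> 0" "Fl2nK \<noteq> 0" "G1 \<noteq> 0" "H2 \<noteq> 0"
  and r1: "G1 * Fl0 = Fln * g" and r2: "H2 * Fl1 = FlnK * h"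
  and T: "FaK * FB * FC * Fl2nK = FE * FD * Far1 * FlnK + FF * FG * Fan * Fln"
  shows "Fa ^ Suc p * (FaK * \<alpha>) / ((Far1 * e1) * (Fan * e2)) * (\<beta> * FA) / (Fc * P1) * ((\<gamma> * FB) * (FC * \<delta>)) / ((Fln * g) * (h * FlnK))
   = FE * FA / (Fc * Fl0) * (Fa ^ Suc p * \<alpha> / (e1 * (Fan * e2)) * \<beta> / P1 * ((FD * \<gamma>) * \<delta>) / (G1 * (Fl2nK * h)))
   + FF * Fa / (Fc * Fl1) * (Fa ^ p * \<alpha> / ((Far1 * e1) * e2) * (\<beta> * FA) / P1 * (\<gamma> * (\<delta> * FG)) / ((g * Fl2nK) * H2))"
proof -
  have G1: "G1 = Fln * g / Fl0" using r1 nz by (simp add: field_simps)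
  have H2: "H2 = FlnK * h / Fl1" using r2 nz by (simp add: field_simps)
  define Z where "Z = Fa ^ p * \<alpha> * \<beta> * FA * \<gamma> * \<delta> * Fa / (Fc * P1 * e1 * e2 * g * h)"
  have L: "Fa ^ Suc p * (FaK * \<alpha>) / ((Far1 * e1) * (Fan * e2)) * (\<beta> * FA) / (Fc * P1) * ((\<gamma> * FB) * (FC * \<delta>)) / ((Fln * g) * (h * FlnK))
     = Z * ((FaK * FB * FC) / (Far1 * Fan * Fln * FlnK))"
    unfolding Z_def using nz by (simp add: field_simps)
  have R1: "FE * FA / (Fc * Fl0) * (Fa ^ Suc p * \<alpha> / (e1 * (Fan * e2)) * \<beta> / P1 * ((FD * \<gamma>) * \<delta>) / (G1 * (Fl2nK * h)))
     = Z * ((FE * FD) / (Fan * Fln * Fl2nK))"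
    unfolding Z_def G1 using nz by (simp add: field_simps)
  have R2: "FF * Fa / (Fc * Fl1) * (Fa ^ p * \<alpha> / ((Far1 * e1) * e2) * (\<beta> * FA) / P1 * (\<gamma> * (\<delta> * FG)) / ((g * Fl2nK) * H2))
     = Z * ((FF * FG) / (Far1 * Fl2nK * FlnK))"
    unfolding Z_def H2 using nz by (simp add: field_simps)
  have E: "(FaK * FB * FC) / (Far1 * Fan * Fln * FlnK) = (FE * FD) / (Fan * Fln * Fl2nK) + (FF * FG) / (Far1 * Fl2nK * FlnK)"
      using nz T by (simp add: field_simps)
  show ?thesis unfolding L R1 R2 E by (simp add: distrib_left)
qed


definition pp :: "(complex \<Rightarrow> complex) \<Rightarrow> complex \<Rightarrow> complex \<Rightarrow> nat \<Rightarrow> complex" where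
  "pp f \<eta> x k = (\<Prod>m<k. f (x - 2 * \<eta> * of_nat m))"

lemma epoch_pp: "epoch f \<eta> x (int k) = pp f \<eta> x k"
  unfolding epoch_def pp_def by simp

lemma pp_0[simp]: "pp f \<eta> x 0 = 1" unfolding pp_def by simp

lemma pp_Suc1: "pp f \<eta> x (Suc k) = f x * pp f \<eta> (x - 2*\<eta>) k"
  unfolding pp_def prod.lessThan_Suc_shift by (simp add: algebra_simps)

lemma pp_Suc2: "pp f \<eta> x (Suc k) = pp f \<eta> x k * f (x - 2*\<eta>* of_nat k)"
  unfolding pp_def by simp

lemma pp_nz: "(\<And>m. m < k \<Longrightarrow> f (x - 2*\<eta>* of_nat m) \<noteq> 0) \<Longrightarrow> pp f \<eta> x k \<noteq> 0"
  unfolding pp_def by (simp add: prod_zero_iff)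

definition col :: "(complex \<Rightarrow> complex) \<Rightarrow> complex \<Rightarrow> complex \<Rightarrow> complex \<Rightarrow> nat \<Rightarrow> nat \<Rightarrow> nat list \<Rightarrow> complex \<Rightarrow> complex" where
  "col f \<eta> Lam lam J i A v = (\<Prod>n<J. W1 f \<eta> Lam (int i + int (\<Sum>m<n. A!m)) (A!n) (int i + int (\<Sum>m<Suc n. A!m)) 0
      (v + 2 * \<eta> * of_nat n) (Phi \<eta> lam J A n))"

lemma sum_list_nth: "sum_list A = (\<Sum>m<length A. A!m)"
  by (simp add: sum_list_sum_nth atLeast0LessThan)

lemma Wcol_col:
  assumes "A \<in> bseqs J j"
  shows "Wcol f \<eta> Lam J (int i) A (int i + j) (Kstd J 0) v lam = col f \<eta> Lam lam J i A v"
proof -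
  have len: "length A = J" and sA: "int (sum_list A) = j" using assms unfolding bseqs_def by auto
  have K: "Kstd J 0 = replicate J 0" unfolding Kstd_def by simp
  have ist: "istate (int i) A (Kstd J 0) n = int i + int (\<Sum>m<n. A!m)" if "n \<le> J" for n
    unfolding istate_def K using that by (simp add: of_nat_sum)
  have c1: "\<forall>n\<le>J. istate (int i) A (Kstd J 0) n \<ge> 0" using ist by (simp add: sum_nonneg)
  have c2: "istate (int i) A (Kstd J 0) J = int i + j" using ist[of J] sA len sum_list_nth[of A] by simp
  have "Wcol f \<eta> Lam J (int i) A (int i + j) (Kstd J 0) v lam = (\<Prod>n<J. W1 f \<eta> Lam (istate (int i) A (Kstd J 0) n) (A ! n)
                 (istate (int i) A (Kstd J 0) (Suc n)) (Kstd J 0 ! n) (v + 2 * \<eta> * of_nat n) (Phi \<eta> lam J A n))"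
    unfolding Wcol_def using c1 c2 by simp
  also have "\<dots> = col f \<eta> Lam lam J i A v"
    unfolding col_def by (rule prod.cong) (simp_all add: ist[unfolded K] K)
  finally show ?thesis .
qed

lemma bsum: fixes \<eta> :: complex shows "set A \<subseteq> {0,1} \<Longrightarrow> (\<Sum>m<length A. if A!m = 0 then - 2*\<eta> else 2*\<eta>) = 2*\<eta>*(2* of_nat (sum_list A) - of_nat (length A))"
proof (induction A)
  case Nil then show ?case by simp
next
  case (Cons x A)
  then have x: "x = 0 \<or> x = 1" and s: "set A \<subseteq> {0,1}" by auto
  show ?case unfolding length_Cons sum.lessThan_Suc_shift using Cons.IH[OF s] x
    by (auto simp: algebra_simps)
qed

lemma Phi0:
  assumes "set A \<subseteq> {0,1}" "length A = J"
  shows "Phi \<eta> lam (Suc J) (x#A) 0 = lam + 2*\<eta>*(2* of_nat (sum_list A) - of_nat J)"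
proof -
  have "Phi \<eta> lam (Suc J) (x#A) 0 = lam + (\<Sum>m\<in>{Suc 0..<Suc J}. if (x#A)!m = 0 then - 2 * \<eta> else 2 * \<eta>)"
    unfolding Phi_def by simp
  also have "(\<Sum>m\<in>{Suc 0..<Suc J}. if (x#A)!m = 0 then - 2 * \<eta> else 2 * \<eta>) = (\<Sum>m\<in>{0..<J}. if A!m = 0 then - 2 * \<eta> else 2 * \<eta>)"
    by (simp only: sum.shift_bounds_Suc_ivl) simp
  also have "\<dots> = 2*\<eta>*(2* of_nat (sum_list A) - of_nat J)" using bsum[OF assms(1), of \<eta>] assms(2) by (simp add: atLeast0LessThan)
  finally show ?thesis .
qed

lemma col_Cons:
  "col f \<eta> Lam lam (Suc J) i (x#A) v = W1 f \<eta> Lam (int i) x (int i + int x) 0 v (Phi \<eta> lam (Suc J) (x#A) 0)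
     * col f \<eta> Lam lam J (i + x) A (v + 2*\<eta>)"
proof -
  have P: "Phi \<eta> lam (Suc J) (x#A) (Suc n) = Phi \<eta> lam J A n" for n
  proof -
    have "(\<Sum>m\<in>{Suc n+1..<Suc J}. if (x#A)!m = 0 then - 2 * \<eta> else 2 * \<eta>) = (\<Sum>m\<in>{n+1..<J}. if A!m = 0 then - 2 * \<eta> else 2 * \<eta>)"
      unfolding add_Suc Suc_eq_plus1[symmetric] by (simp only: sum.shift_bounds_Suc_ivl) simp
    then show ?thesis unfolding Phi_def by simp
  qed
  show ?thesis unfolding col_def prod.lessThan_Suc_shift sum.lessThan_Suc_shift
    by (simp add: P algebra_simps)
qed

definition Wc where "Wc f \<eta> Lam lam J i j v = (\<Sum>A\<in>bseqs J j. col f \<eta> Lam lam J i A v)"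

lemma Wfused_Wc: "Wfused f \<eta> Lam J (int i) j (int i + j) 0 v lam = Wc f \<eta> Lam lam J i j v"
  unfolding Wfused_def Wc_def by (rule sum.cong[OF refl]) (rule Wcol_col)

lemma bseqs_finite: "finite (bseqs J j)"
proof -
  have "bseqs J j \<subseteq> {xs. set xs \<subseteq> {0,1} \<and> length xs = J}" unfolding bseqs_def by auto
  then show ?thesis using finite_lists_length_eq[of "{0::nat,1}" J] finite_subset by blast
qed

lemma bseqs_empty: "j < 0 \<or> j > int J \<Longrightarrow> bseqs J j = {}"
proof -
  assume a: "j < 0 \<or> j > int J"
  have "sum_list xs \<le> length xs" if "set xs \<subseteq> {0,1}" for xs :: "nat list"
    using that by (induction xs) auto
  note le = this
  { fix xs assume "xs \<in> bseqs J j"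
    then have "length xs = J" "set xs \<subseteq> {0,1}" "int (sum_list xs) = j" by (auto simp: bseqs_def)
    with le[of xs] a have False by linarith }
  then show ?thesis by blast
qed

lemma bseqs_0: "bseqs 0 j = (if j = 0 then {[]} else {})"
  unfolding bseqs_def by auto

lemma bseqs_Suc: "bseqs (Suc J) j = Cons 0 ` bseqs J j \<union> Cons 1 ` bseqs J (j - 1)"
proof -
  have "xs \<in> bseqs (Suc J) j \<longleftrightarrow> xs \<in> Cons 0 ` bseqs J j \<union> Cons 1 ` bseqs J (j - 1)" for xs
  proof
    assume "xs \<in> bseqs (Suc J) j"
    then obtain y ys where xs: "xs = y # ys" and l: "length ys = J" and s: "set (y#ys) \<subseteq> {0,1}" and "int (sum_list (y#ys)) = j"
      unfolding bseqs_def by (auto simp: length_Suc_conv)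
    then show "xs \<in> Cons 0 ` bseqs J j \<union> Cons 1 ` bseqs J (j - 1)" unfolding bseqs_def by auto
  next
    assume "xs \<in> Cons 0 ` bseqs J j \<union> Cons 1 ` bseqs J (j - 1)"
    then show "xs \<in> bseqs (Suc J) j" unfolding bseqs_def by auto
  qed
  then show ?thesis by blast
qed

lemma Wc_rec:
  "Wc f \<eta> Lam lam (Suc J) i j v =
     W1 f \<eta> Lam (int i) 0 (int i) 0 v (lam + 2*\<eta>*(2* of_int j - of_nat J)) * Wc f \<eta> Lam lam J i j (v + 2*\<eta>)
   + W1 f \<eta> Lam (int i) 1 (int i + 1) 0 v (lam + 2*\<eta>*(2* of_int (j - 1) - of_nat J)) * Wc f \<eta> Lam lam J (Suc i) (j - 1) (v + 2*\<eta>)"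
proof -
  have d: "Cons 0 ` bseqs J j \<inter> Cons 1 ` bseqs J (j - 1) = {}" by auto
  have "Wc f \<eta> Lam lam (Suc J) i j v = (\<Sum>A\<in>Cons 0 ` bseqs J j. col f \<eta> Lam lam (Suc J) i A v)
      + (\<Sum>A\<in>Cons 1 ` bseqs J (j - 1). col f \<eta> Lam lam (Suc J) i A v)"
    unfolding Wc_def bseqs_Suc by (rule sum.union_disjoint) (auto simp: bseqs_finite d)
  also have "(\<Sum>A\<in>Cons 0 ` bseqs J j. col f \<eta> Lam lam (Suc J) i A v) = (\<Sum>A\<in>bseqs J j. col f \<eta> Lam lam (Suc J) i (0#A) v)"
    by (subst sum.reindex) (auto simp: inj_on_def)
  also have "\<dots> = (\<Sum>A\<in>bseqs J j. W1 f \<eta> Lam (int i) 0 (int i) 0 v (lam + 2*\<eta>*(2* of_int j - of_nat J)) * col f \<eta> Lam lam J i A (v + 2*\<eta>))"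
  proof (rule sum.cong)
    fix A assume "A \<in> bseqs J j"
    then have "set A \<subseteq> {0,1}" "length A = J" "int (sum_list A) = j" unfolding bseqs_def by auto
    then have "set A \<subseteq> {0,1}" "length A = J" "of_nat (sum_list A) = (of_int j :: complex)" by (metis of_int_of_nat_eq)+
    then show "col f \<eta> Lam lam (Suc J) i (0#A) v = W1 f \<eta> Lam (int i) 0 (int i) 0 v (lam + 2*\<eta>*(2* of_int j - of_nat J)) * col f \<eta> Lam lam J i A (v + 2*\<eta>)"
      unfolding col_Cons by (simp add: Phi0)
  qed simp
  also have "(\<Sum>A\<in>Cons 1 ` bseqs J (j-1). col f \<eta> Lam lam (Suc J) i A v) = (\<Sum>A\<in>bseqs J (j-1). col f \<eta> Lam lam (Suc J) i (1#A) v)"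
    by (subst sum.reindex) (auto simp: inj_on_def)
  also have "\<dots> = (\<Sum>A\<in>bseqs J (j-1). W1 f \<eta> Lam (int i) 1 (int i + 1) 0 v (lam + 2*\<eta>*(2* of_int (j - 1) - of_nat J)) * col f \<eta> Lam lam J (Suc i) A (v + 2*\<eta>))"
  proof (rule sum.cong)
    fix A assume "A \<in> bseqs J (j-1)"
    then have "set A \<subseteq> {0,1}" "length A = J" "int (sum_list A) = (j-1)" unfolding bseqs_def by auto
    then have "set A \<subseteq> {0,1}" "length A = J" "of_nat (sum_list A) = (of_int (j-1) :: complex)" by (metis of_int_of_nat_eq)+
    then show "col f \<eta> Lam lam (Suc J) i (1#A) v = W1 f \<eta> Lam (int i) 1 (int i + 1) 0 v (lam + 2*\<eta>*(2* of_int (j - 1) - of_nat J)) * col f \<eta> Lam lam J (Suc i) A (v + 2*\<eta>)"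
      unfolding col_Cons by (simp add: Phi0)
  qed simp
  finally show ?thesis unfolding Wc_def by (simp add: sum_distrib_left)
qed


lemma fcong: "x = y \<Longrightarrow> (f::complex\<Rightarrow>complex) x = f y" by simp
lemma ppcong: "x = y \<Longrightarrow> k = k' \<Longrightarrow> pp f \<eta> x k = pp f \<eta> y k'" by simp

lemma nzA: fixes f :: "complex \<Rightarrow> complex" shows "(\<And>m. 1 \<le> m \<Longrightarrow> m \<le> K \<Longrightarrow> f (2 * \<eta> * of_nat m) \<noteq> 0) \<Longrightarrow> 1 \<le> m \<Longrightarrow> m \<le> K \<Longrightarrow> z = 2 * \<eta> * of_nat m \<Longrightarrow> f z \<noteq> 0"
  by blast
lemma nzL: fixes f :: "complex \<Rightarrow> complex" shows "(\<And>t::int. \<bar>t\<bar> \<le> int K \<Longrightarrow> f (lam + 2 * \<eta> * of_int t) \<noteq> 0) \<Longrightarrow> \<bar>t\<bar> \<le> int K \<Longrightarrow> z = lam + 2 * \<eta> * of_int t \<Longrightarrow> f z \<noteq> 0"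
  by blast
lemma nzC: fixes f :: "complex \<Rightarrow> complex" shows "(\<And>m. m < K \<Longrightarrow> f (\<eta> * Lam - v - 2 * \<eta> * of_nat m) \<noteq> 0) \<Longrightarrow> m < K \<Longrightarrow> z = \<eta> * Lam - v - 2 * \<eta> * of_nat m \<Longrightarrow> f z \<noteq> 0"
  by blast

definition RR where "RR f \<eta> Lam lam J i n v = f (2 * \<eta>) ^ n * pp f \<eta> (2 * \<eta> * of_nat J) J / (pp f \<eta> (2 * \<eta> * (of_nat J - of_nat n)) (J - n) * pp f \<eta> (2 * \<eta> * of_nat n) n) * pp f \<eta> (lam + 2 * \<eta> * (of_nat i + of_nat n)) (J - n) / pp f \<eta> (\<eta> * Lam - v) J * (pp f \<eta> (v + lam + 2 * \<eta> * (of_nat i + 2 * of_nat n - 1) - \<eta> * Lam) n * pp f \<eta> (\<eta> * Lam - 2 * \<eta> * (of_nat i + of_nat n) - v) (J - n)) / (pp f \<eta> (lam + 2 * \<eta> * of_nat n) (J - n) * pp f \<eta> (lam + 2 * \<eta> * (2 * of_nat n - of_nat J - 1)) n)"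

lemma step_general:
  assumes gd: "good f"
    and ha: "\<And>m. 1 \<le> m \<Longrightarrow> m \<le> (Suc (Suc p + r)) \<Longrightarrow> f (2 * \<eta> * of_nat m) \<noteq> 0"
    and hl: "\<And>t::int. \<bar>t\<bar> \<le> int (Suc (Suc p + r)) \<Longrightarrow> f (lam + 2 * \<eta> * of_int t) \<noteq> 0"
    and hc: "\<And>m. m < (Suc (Suc p + r)) \<Longrightarrow> f (\<eta> * Lam - v - 2 * \<eta> * of_nat m) \<noteq> 0"
  shows "RR f \<eta> Lam lam (Suc (Suc p + r)) i (Suc p) v = (f (\<eta> * (Lam - 2 * of_nat i) - v) * f (lam + 2 * \<eta> * (2 * of_nat (Suc p) - of_nat (Suc p + r)) + 2 * of_nat i * \<eta>) / (f (\<eta> * Lam - v) * f (lam + 2 * \<eta> * (2 * of_nat (Suc p) - of_nat (Suc p + r))))) * RR f \<eta> Lam lam (Suc p + r) i (Suc p) (v + 2 * \<eta>) + (f (v + (lam + 2 * \<eta> * (2 * of_nat p - of_nat (Suc p + r))) + \<eta> * (2 * of_nat i + 2 - Lam)) * f (2 * \<eta>) / (f (\<eta> * Lam - v) * f (lam + 2 * \<eta> * (2 * of_nat p - of_nat (Suc p + r))))) * RR f \<eta> Lam lam (Suc p + r) (Suc i) p (v + 2 * \<eta>)"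
proof -
  have len: "(Suc (Suc p + r)) - (Suc p) = Suc r" "(Suc p + r) - (Suc p) = r" "(Suc p + r) - p = Suc r" by simp_all
  define FaK where "FaK = f (2 * \<eta> * of_nat (Suc (Suc p + r)))"
  define Far1 where "Far1 = f (2 * \<eta> * (of_nat r + 1))"
  define Fan where "Fan = f (2 * \<eta> * (of_nat p + 1))"
  define Fc where "Fc = f (\<eta> * Lam - v)"
  define FA where "FA = f (lam + 2 * \<eta> * (of_nat i + of_nat p + 1 - of_nat r))"
  define FB where "FB = f (lam - (\<eta> * Lam - v) + 2 * \<eta> * (of_nat i + of_nat p + 1))"
  define FC where "FC = f (\<eta> * Lam - v - 2 * \<eta> * (of_nat i + of_nat p + 1))"
  define FD where "FD = f (lam - (\<eta> * Lam - v) + 2 * \<eta> * (of_nat i + 2 * of_nat p + 2))"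
  define FE where "FE = f (\<eta> * Lam - v - 2 * \<eta> * of_nat i)"
  define FF where "FF = f (lam - (\<eta> * Lam - v) + 2 * \<eta> * (of_nat i + of_nat p - of_nat r))"
  define FG where "FG = f (\<eta> * Lam - v - 2 * \<eta> * (of_nat i + of_nat p + of_nat r + 2))"
  define Fln where "Fln = f (lam + 2 * \<eta> * (of_nat p + 1))"
  define FlnK where "FlnK = f (lam - 2 * \<eta> * (of_nat r + 1))"
  define Fl2nK where "Fl2nK = f (lam + 2 * \<eta> * (of_nat p - of_nat r))"
  define Fl0 where "Fl0 = f (lam + 2 * \<eta> * (of_nat p - of_nat r + 1))"
  define Fl1 where "Fl1 = f (lam + 2 * \<eta> * (of_nat p - of_nat r - 1))"
  define al where "al = pp f \<eta> (2 * \<eta> * of_nat (Suc p + r)) (Suc p + r)"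
  define e1 where "e1 = pp f \<eta> (2 * \<eta> * (of_nat (Suc p + r) - of_nat (Suc p))) ((Suc p + r) - (Suc p))"
  define e2 where "e2 = pp f \<eta> (2 * \<eta> * of_nat p) p"
  define be where "be = pp f \<eta> (lam + 2 * \<eta> * (of_nat i + of_nat (Suc p))) ((Suc p + r) - (Suc p))"
  define P1 where "P1 = pp f \<eta> (\<eta> * Lam - (v + 2 * \<eta>)) (Suc p + r)"
  define ga where "ga = pp f \<eta> ((v + 2 * \<eta>) + lam + 2 * \<eta> * (of_nat (Suc i) + 2 * of_nat p - 1) - \<eta> * Lam) p"
  define de where "de = pp f \<eta> (\<eta> * Lam - 2 * \<eta> * (of_nat i + of_nat (Suc p)) - (v + 2 * \<eta>)) ((Suc p + r) - (Suc p))"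
  define g where "g = pp f \<eta> (lam + 2 * \<eta> * of_nat p) r"
  define h where "h = pp f \<eta> (lam + 2 * \<eta> * (2 * of_nat (Suc p) - of_nat (Suc (Suc p + r)) - 1)) p"
  define G1 where "G1 = pp f \<eta> (lam + 2 * \<eta> * of_nat (Suc p)) ((Suc p + r) - (Suc p))"
  define H2 where "H2 = pp f \<eta> (lam + 2 * \<eta> * (2 * of_nat p - of_nat (Suc p + r) - 1)) p"
  have q0: "pp f \<eta> (2 * \<eta> * of_nat (Suc (Suc p + r))) (Suc (Suc p + r)) = FaK * al"
    unfolding FaK_def al_def len pp_Suc1
    by (rule arg_cong2[where f="(*)"]; (rule ppcong | rule fcong)?; simp add: algebra_simps)
  have q1: "pp f \<eta> (2 * \<eta> * (of_nat (Suc (Suc p + r)) - of_nat (Suc p))) ((Suc (Suc p + r)) - (Suc p)) = Far1 * e1"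
    unfolding Far1_def e1_def len pp_Suc1
    by (rule arg_cong2[where f="(*)"]; (rule ppcong | rule fcong)?; simp add: algebra_simps)
  have q2: "pp f \<eta> (2 * \<eta> * of_nat (Suc p)) (Suc p) = Fan * e2"
    unfolding Fan_def e2_def len pp_Suc1
    by (rule arg_cong2[where f="(*)"]; (rule ppcong | rule fcong)?; simp add: algebra_simps)
  have q3: "pp f \<eta> (lam + 2 * \<eta> * (of_nat i + of_nat (Suc p))) ((Suc (Suc p + r)) - (Suc p)) = be * FA"
    unfolding FA_def be_def len pp_Suc2
    by (rule arg_cong2[where f="(*)"]; (rule ppcong | rule fcong)?; simp add: algebra_simps)
  have q4: "pp f \<eta> (\<eta> * Lam - v) (Suc (Suc p + r)) = Fc * P1"
    unfolding Fc_def P1_def len pp_Suc1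
    by (rule arg_cong2[where f="(*)"]; (rule ppcong | rule fcong)?; simp add: algebra_simps)
  have q5: "pp f \<eta> (v + lam + 2 * \<eta> * (of_nat i + 2 * of_nat (Suc p) - 1) - \<eta> * Lam) (Suc p) = ga * FB"
    unfolding FB_def ga_def len pp_Suc2
    by (rule arg_cong2[where f="(*)"]; (rule ppcong | rule fcong)?; simp add: algebra_simps)
  have q6: "pp f \<eta> (\<eta> * Lam - 2 * \<eta> * (of_nat i + of_nat (Suc p)) - v) ((Suc (Suc p + r)) - (Suc p)) = FC * de"
    unfolding FC_def de_def len pp_Suc1
    by (rule arg_cong2[where f="(*)"]; (rule ppcong | rule fcong)?; simp add: algebra_simps)
  have q7: "pp f \<eta> (lam + 2 * \<eta> * of_nat (Suc p)) ((Suc (Suc p + r)) - (Suc p)) = Fln * g"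
    unfolding Fln_def g_def len pp_Suc1
    by (rule arg_cong2[where f="(*)"]; (rule ppcong | rule fcong)?; simp add: algebra_simps)
  have q8: "pp f \<eta> (lam + 2 * \<eta> * (2 * of_nat (Suc p) - of_nat (Suc (Suc p + r)) - 1)) (Suc p) = h * FlnK"
    unfolding FlnK_def h_def len pp_Suc2
    by (rule arg_cong2[where f="(*)"]; (rule ppcong | rule fcong)?; simp add: algebra_simps)
  have q9: "pp f \<eta> (2 * \<eta> * of_nat (Suc p)) (Suc p) = Fan * e2"
    unfolding Fan_def e2_def len pp_Suc1
    by (rule arg_cong2[where f="(*)"]; (rule ppcong | rule fcong)?; simp add: algebra_simps)
  have q10: "pp f \<eta> ((v + 2 * \<eta>) + lam + 2 * \<eta> * (of_nat i + 2 * of_nat (Suc p) - 1) - \<eta> * Lam) (Suc p) = FD * ga"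
    unfolding FD_def ga_def len pp_Suc1
    by (rule arg_cong2[where f="(*)"]; (rule ppcong | rule fcong)?; simp add: algebra_simps)
  have q11: "pp f \<eta> (lam + 2 * \<eta> * (2 * of_nat (Suc p) - of_nat (Suc p + r) - 1)) (Suc p) = Fl2nK * h"
    unfolding Fl2nK_def h_def len pp_Suc1
    by (rule arg_cong2[where f="(*)"]; (rule ppcong | rule fcong)?; simp add: algebra_simps)
  have q12: "pp f \<eta> (2 * \<eta> * (of_nat (Suc p + r) - of_nat p)) ((Suc p + r) - p) = Far1 * e1"
    unfolding Far1_def e1_def len pp_Suc1
    by (rule arg_cong2[where f="(*)"]; (rule ppcong | rule fcong)?; simp add: algebra_simps)
  have q13: "pp f \<eta> (lam + 2 * \<eta> * (of_nat (Suc i) + of_nat p)) ((Suc p + r) - p) = be * FA"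
    unfolding FA_def be_def len pp_Suc2
    by (rule arg_cong2[where f="(*)"]; (rule ppcong | rule fcong)?; simp add: algebra_simps)
  have q14: "pp f \<eta> (\<eta> * Lam - 2 * \<eta> * (of_nat (Suc i) + of_nat p) - (v + 2 * \<eta>)) ((Suc p + r) - p) = de * FG"
    unfolding FG_def de_def len pp_Suc2
    by (rule arg_cong2[where f="(*)"]; (rule ppcong | rule fcong)?; simp add: algebra_simps)
  have q15: "pp f \<eta> (lam + 2 * \<eta> * of_nat p) ((Suc p + r) - p) = g * Fl2nK"
    unfolding Fl2nK_def g_def len pp_Suc2
    by (rule arg_cong2[where f="(*)"]; (rule ppcong | rule fcong)?; simp add: algebra_simps)
  have k0: "f (\<eta> * (Lam - 2 * of_nat i) - v) = FE" unfolding FE_def by (rule fcong) (simp add: algebra_simps)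
  have k1: "f (lam + 2 * \<eta> * (2 * of_nat (Suc p) - of_nat (Suc p + r)) + 2 * of_nat i * \<eta>) = FA" unfolding FA_def by (rule fcong) (simp add: algebra_simps)
  have k2: "f (\<eta> * Lam - v) = Fc" unfolding Fc_def by (rule fcong) (simp add: algebra_simps)
  have k3: "f (lam + 2 * \<eta> * (2 * of_nat (Suc p) - of_nat (Suc p + r))) = Fl0" unfolding Fl0_def by (rule fcong) (simp add: algebra_simps)
  have k4: "f (v + (lam + 2 * \<eta> * (2 * of_nat p - of_nat (Suc p + r))) + \<eta> * (2 * of_nat i + 2 - Lam)) = FF" unfolding FF_def by (rule fcong) (simp add: algebra_simps)
  have k5: "f (lam + 2 * \<eta> * (2 * of_nat p - of_nat (Suc p + r))) = Fl1" unfolding Fl1_def by (rule fcong) (simp add: algebra_simps)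
  have odd: "\<And>z. f (- z) = - f z" using gd unfolding good_def by blast
  note nzA = nzA[where f=f and \<eta>=\<eta> and K="Suc (Suc p + r)", OF ha] and nzL = nzL[where f=f and \<eta>=\<eta> and lam=lam and K="Suc (Suc p + r)", OF hl] and nzC = nzC[where f=f and \<eta>=\<eta> and Lam=Lam and v=v and K="Suc (Suc p + r)", OF hc]
  have n1: "Far1 \<noteq> 0" unfolding Far1_def by (rule nzA[where m="Suc r"]) ((simp; fail) | (simp add: algebra_simps))+
  have n2: "e1 \<noteq> 0" unfolding e1_def len
    apply (rule pp_nz) subgoal for m by (rule nzA[where m="r - m"]) ((simp add: of_nat_diff; fail) | (simp add: algebra_simps of_nat_diff))+ done
  have n3: "Fan \<noteq> 0" unfolding Fan_def by (rule nzA[where m="Suc p"]) ((simp; fail) | (simp add: algebra_simps))+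
  have n4: "e2 \<noteq> 0" unfolding e2_def
    apply (rule pp_nz) subgoal for m by (rule nzA[where m="p - m"]) ((simp add: of_nat_diff; fail) | (simp add: algebra_simps of_nat_diff))+ done
  have n5: "Fc \<noteq> 0" unfolding Fc_def by (rule nzC[where m=0]) auto
  have n6: "P1 \<noteq> 0" unfolding P1_def
    apply (rule pp_nz) subgoal for m by (rule nzC[where m="Suc m"]) ((simp; fail) | (simp add: algebra_simps))+ done
  have n7: "Fln \<noteq> 0" unfolding Fln_def by (rule nzL[where t="int p + 1"]) ((simp; fail) | (simp add: algebra_simps))+
  have n8: "g \<noteq> 0" unfolding g_def
    apply (rule pp_nz) subgoal for m by (rule nzL[where t="int p - int m"]) ((simp; fail) | (simp add: algebra_simps))+ done
  have n9: "h \<noteq> 0" unfolding h_def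
    apply (rule pp_nz) subgoal for m by (rule nzL[where t="int p - int r - 1 - int m"]) ((simp; fail) | (simp add: algebra_simps))+ done
  have n10: "FlnK \<noteq> 0" unfolding FlnK_def by (rule nzL[where t="- int r - 1"]) ((simp; fail) | (simp add: algebra_simps))+
  have n11: "Fl0 \<noteq> 0" unfolding Fl0_def by (rule nzL[where t="int p - int r + 1"]) ((simp; fail) | (simp add: algebra_simps))+
  have n12: "Fl1 \<noteq> 0" unfolding Fl1_def by (rule nzL[where t="int p - int r - 1"]) ((simp; fail) | (simp add: algebra_simps))+
  have n13: "Fl2nK \<noteq> 0" unfolding Fl2nK_def by (rule nzL[where t="int p - int r"]) ((simp; fail) | (simp add: algebra_simps))+
  have n14: "G1 \<noteq> 0" unfolding G1_def len
    apply (rule pp_nz) subgoal for m by (rule nzL[where t="int p + 1 - int m"]) ((simp; fail) | (simp add: algebra_simps))+ done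
  have n15: "H2 \<noteq> 0" unfolding H2_def
    apply (rule pp_nz) subgoal for m by (rule nzL[where t="int p - int r - 2 - int m"]) ((simp; fail) | (simp add: algebra_simps))+ done
  have r1: "G1 * Fl0 = Fln * g"
  proof -
    have "pp f \<eta> (lam + 2 * \<eta> * of_nat (Suc p)) (Suc r) = G1 * Fl0"
      unfolding G1_def Fl0_def len pp_Suc2
      by (rule arg_cong2[where f="(*)"]; (rule ppcong | rule fcong)?; simp add: algebra_simps)
    moreover have "pp f \<eta> (lam + 2 * \<eta> * of_nat (Suc p)) (Suc r) = Fln * g"
      unfolding Fln_def g_def pp_Suc1
      by (rule arg_cong2[where f="(*)"]; (rule ppcong | rule fcong)?; simp add: algebra_simps)
    ultimately show ?thesis by (simp add: mult_ac)
  qed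
  have r2: "H2 * Fl1 = FlnK * h"
  proof -
    have "pp f \<eta> (lam + 2 * \<eta> * (of_nat p - of_nat r - 1)) (Suc p) = Fl1 * H2"
      unfolding H2_def Fl1_def pp_Suc1
      by (rule arg_cong2[where f="(*)"]; (rule ppcong | rule fcong)?; simp add: algebra_simps)
    moreover have "pp f \<eta> (lam + 2 * \<eta> * (of_nat p - of_nat r - 1)) (Suc p) = h * FlnK"
      unfolding FlnK_def h_def pp_Suc2
      by (rule arg_cong2[where f="(*)"]; (rule ppcong | rule fcong)?; simp add: algebra_simps)
    ultimately show ?thesis by (simp add: mult_ac)
  qed
  have T: "FaK * FB * FC * Fl2nK = FE * FD * Far1 * FlnK + FF * FG * Fan * Fln"
  proof -
    define x1 where "x1 = lam / 2 + 2 * \<eta> * (of_nat p + 1)"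
    define x2 where "x2 = lam / 2"
    define x3 where "x3 = lam / 2 - (\<eta> * Lam - v) + 2 * \<eta> * (of_nat i + of_nat p + 1)"
    define x4 where "x4 = 2 * \<eta> * (of_nat r + 1) - lam / 2"
    have a1: "f (x1 + x3) = FD" unfolding FD_def x1_def x3_def by (rule fcong) (simp add: algebra_simps)
    have a2: "f (x1 - x3) = FE" unfolding FE_def x1_def x3_def by (rule fcong) (simp add: algebra_simps)
    have a3: "f (x2 + x4) = Far1" unfolding Far1_def x2_def x4_def by (rule fcong) (simp add: algebra_simps)
    have a4: "f (x2 - x4) = FlnK" unfolding FlnK_def x2_def x4_def by (rule fcong) (simp add: algebra_simps)
    have a5: "f (x1 + x2) = Fln" unfolding Fln_def x1_def x2_def by (rule fcong) (simp add: algebra_simps)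
    have a6: "f (x1 - x2) = Fan" unfolding Fan_def x1_def x2_def by (rule fcong) (simp add: algebra_simps)
    have a7: "f (x4 + x3) = - FG"
    proof -
      have "x4 + x3 = - (\<eta> * Lam - v - 2 * \<eta> * (of_nat i + of_nat p + of_nat r + 2))"
        unfolding x3_def x4_def by (simp add: algebra_simps)
      then show ?thesis unfolding FG_def by (simp only: odd)
    qed
    have a8: "f (x4 - x3) = - FF"
    proof -
      have "x4 - x3 = - (lam - (\<eta> * Lam - v) + 2 * \<eta> * (of_nat i + of_nat p - of_nat r))"
        unfolding x3_def x4_def by (simp add: algebra_simps)
      then show ?thesis unfolding FF_def by (simp only: odd)
    qed
    have a9: "f (x1 + x4) = FaK" unfolding FaK_def x1_def x4_def by (rule fcong) (simp add: algebra_simps)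
    have a10: "f (x1 - x4) = Fl2nK" unfolding Fl2nK_def x1_def x4_def by (rule fcong) (simp add: algebra_simps)
    have a11: "f (x2 + x3) = FB" unfolding FB_def x2_def x3_def by (rule fcong) (simp add: algebra_simps)
    have a12: "f (x2 - x3) = FC" unfolding FC_def x2_def x3_def by (rule fcong) (simp add: algebra_simps)
    show ?thesis using three_term[OF gd, of x1 x3 x2 x4] unfolding a1 a2 a3 a4 a5 a6 a7 a8 a9 a10 a11 a12
      by (simp add: algebra_simps)
  qed
  show ?thesis
    unfolding RR_def q0 q1 q2 q3 q4 q5 q6 q7 q8 q9 q10 q11 q12 q13 q14 q15 k0 k1 k2 k3 k4 k5
      al_def[symmetric] e1_def[symmetric] e2_def[symmetric] be_def[symmetric] P1_def[symmetric] ga_def[symmetric]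
      de_def[symmetric] G1_def[symmetric] H2_def[symmetric]
    by (rule alg_main[OF n1 n2 n3 n4 n5 n6 n7 n8 n9 n10 n11 n12 n13 n14 n15 r1 r2 T])
qed


lemma step_zero:
  assumes gd: "good f"
    and ha: "\<And>m. 1 \<le> m \<Longrightarrow> m \<le> (Suc J) \<Longrightarrow> f (2 * \<eta> * of_nat m) \<noteq> 0"
    and hl: "\<And>t::int. \<bar>t\<bar> \<le> int (Suc J) \<Longrightarrow> f (lam + 2 * \<eta> * of_int t) \<noteq> 0"
    and hc: "\<And>m. m < (Suc J) \<Longrightarrow> f (\<eta> * Lam - v - 2 * \<eta> * of_nat m) \<noteq> 0"
  shows "RR f \<eta> Lam lam (Suc J) i 0 v = (f (\<eta> * (Lam - 2 * of_nat i) - v) * f (lam + 2 * \<eta> * (2 * of_nat 0 - of_nat J) + 2 * of_nat i * \<eta>) / (f (\<eta> * Lam - v) * f (lam + 2 * \<eta> * (2 * of_nat 0 - of_nat J)))) * RR f \<eta> Lam lam J i 0 (v + 2 * \<eta>)"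
proof -
  note nzA = nzA[where f=f and \<eta>=\<eta> and K="(Suc J)", OF ha] and nzL = nzL[where f=f and \<eta>=\<eta> and lam=lam and K="(Suc J)", OF hl] and nzC = nzC[where f=f and \<eta>=\<eta> and Lam=Lam and v=v and K="(Suc J)", OF hc]
  define FA where "FA = f (lam + 2 * \<eta> * (of_nat i - of_nat J))"
  define Fc where "Fc = f (\<eta> * Lam - v)"
  define FE where "FE = f (\<eta> * Lam - v - 2 * \<eta> * of_nat i)"
  define Fl0 where "Fl0 = f (lam - 2 * \<eta> * of_nat J)"
  define AA where "AA = pp f \<eta> (2 * \<eta> * of_nat (Suc J)) (Suc J)"
  define AB where "AB = pp f \<eta> (2 * \<eta> * of_nat J) J"
  define LA where "LA = pp f \<eta> (lam + 2 * \<eta> * (of_nat i + of_nat 0)) (J - 0)"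
  define P1 where "P1 = pp f \<eta> (\<eta> * Lam - (v + 2 * \<eta>)) J"
  define De where "De = pp f \<eta> (\<eta> * Lam - 2 * \<eta> * (of_nat i + of_nat 0) - (v + 2 * \<eta>)) (J - 0)"
  define Lm where "Lm = pp f \<eta> (lam + 2 * \<eta> * of_nat 0) (J - 0)"
  have q0: "pp f \<eta> (2 * \<eta> * (of_nat (Suc J) - of_nat 0)) ((Suc J) - 0) = AA"
    unfolding AA_def by (rule ppcong) simp_all
  have q1: "pp f \<eta> (2 * \<eta> * of_nat 0) 0 = 1"
    by simp
  have q2: "pp f \<eta> (lam + 2 * \<eta> * (of_nat i + of_nat 0)) ((Suc J) - 0) = LA * FA"
    unfolding FA_def LA_def diff_zero pp_Suc2
    by (rule arg_cong2[where f="(*)"]; (rule ppcong | rule fcong)?; simp add: algebra_simps)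
  have q3: "pp f \<eta> (\<eta> * Lam - v) (Suc J) = Fc * P1"
    unfolding Fc_def P1_def diff_zero pp_Suc1
    by (rule arg_cong2[where f="(*)"]; (rule ppcong | rule fcong)?; simp add: algebra_simps)
  have q4: "pp f \<eta> (v + lam + 2 * \<eta> * (of_nat i + 2 * of_nat 0 - 1) - \<eta> * Lam) 0 = 1"
    by simp
  have q5: "pp f \<eta> (\<eta> * Lam - 2 * \<eta> * (of_nat i + of_nat 0) - v) ((Suc J) - 0) = FE * De"
    unfolding FE_def De_def diff_zero pp_Suc1
    by (rule arg_cong2[where f="(*)"]; (rule ppcong | rule fcong)?; simp add: algebra_simps)
  have q6: "pp f \<eta> (lam + 2 * \<eta> * of_nat 0) ((Suc J) - 0) = Lm * Fl0"
    unfolding Fl0_def Lm_def diff_zero pp_Suc2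
    by (rule arg_cong2[where f="(*)"]; (rule ppcong | rule fcong)?; simp add: algebra_simps)
  have q7: "pp f \<eta> (lam + 2 * \<eta> * (2 * of_nat 0 - of_nat (Suc J) - 1)) 0 = 1"
    by simp
  have q8: "pp f \<eta> (2 * \<eta> * (of_nat J - of_nat 0)) (J - 0) = AB"
    unfolding AB_def by (rule ppcong) simp_all
  have q9: "pp f \<eta> (2 * \<eta> * of_nat 0) 0 = 1"
    by simp
  have q10: "pp f \<eta> ((v + 2 * \<eta>) + lam + 2 * \<eta> * (of_nat i + 2 * of_nat 0 - 1) - \<eta> * Lam) 0 = 1"
    by simp
  have q11: "pp f \<eta> (lam + 2 * \<eta> * (2 * of_nat 0 - of_nat J - 1)) 0 = 1"
    by simp
  have n1: "AA \<noteq> 0" unfolding AA_def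
    apply (rule pp_nz) subgoal for m by (rule nzA[where m="Suc J - m"]) ((simp add: of_nat_diff; fail) | (simp add: algebra_simps of_nat_diff))+ done
  have n2: "AB \<noteq> 0" unfolding AB_def
    apply (rule pp_nz) subgoal for m by (rule nzA[where m="J - m"]) ((simp add: of_nat_diff; fail) | (simp add: algebra_simps of_nat_diff))+ done
  have n3: "Fc \<noteq> 0" unfolding Fc_def by (rule nzC[where m=0]) auto
  have n4: "P1 \<noteq> 0" unfolding P1_def
    apply (rule pp_nz) subgoal for m by (rule nzC[where m="Suc m"]) ((simp; fail) | (simp add: algebra_simps))+ done
  have n5: "Lm \<noteq> 0" unfolding Lm_def
    apply (rule pp_nz) subgoal for m by (rule nzL[where t="- int m"]) ((simp; fail) | (simp add: algebra_simps))+ done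
  have n6: "Fl0 \<noteq> 0" unfolding Fl0_def by (rule nzL[where t="- int J"]) ((simp; fail) | (simp add: algebra_simps))+
  have k0: "f (\<eta> * (Lam - 2 * of_nat i) - v) = FE" unfolding FE_def by (rule fcong) (simp add: algebra_simps)
  have k1: "f (lam + 2 * \<eta> * (2 * of_nat 0 - of_nat J) + 2 * of_nat i * \<eta>) = FA" unfolding FA_def by (rule fcong) (simp add: algebra_simps)
  have k2: "f (lam + 2 * \<eta> * (2 * of_nat 0 - of_nat J)) = Fl0" unfolding Fl0_def by (rule fcong) (simp add: algebra_simps)
  show ?thesis unfolding RR_def q0 q1 q2 q3 q4 q5 q6 q7 q8 q9 q10 q11 k0 k1 k2 Fc_def[symmetric] AA_def[symmetric] AB_def[symmetric] LA_def[symmetric] P1_def[symmetric] De_def[symmetric] Lm_def[symmetric]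
    using n1 n2 n3 n4 n5 n6 by (simp add: field_simps)
qed

lemma step_top:
  assumes gd: "good f"
    and ha: "\<And>m. 1 \<le> m \<Longrightarrow> m \<le> (Suc J) \<Longrightarrow> f (2 * \<eta> * of_nat m) \<noteq> 0"
    and hl: "\<And>t::int. \<bar>t\<bar> \<le> int (Suc J) \<Longrightarrow> f (lam + 2 * \<eta> * of_int t) \<noteq> 0"
    and hc: "\<And>m. m < (Suc J) \<Longrightarrow> f (\<eta> * Lam - v - 2 * \<eta> * of_nat m) \<noteq> 0"
  shows "RR f \<eta> Lam lam (Suc J) i (Suc J) v = (f (v + (lam + 2 * \<eta> * (2 * of_nat J - of_nat J)) + \<eta> * (2 * of_nat i + 2 - Lam)) * f (2 * \<eta>) / (f (\<eta> * Lam - v) * f (lam + 2 * \<eta> * (2 * of_nat J - of_nat J)))) * RR f \<eta> Lam lam J (Suc i) J (v + 2 * \<eta>)"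
proof -
  note nzA = nzA[where f=f and \<eta>=\<eta> and K="(Suc J)", OF ha] and nzL = nzL[where f=f and \<eta>=\<eta> and lam=lam and K="(Suc J)", OF hl] and nzC = nzC[where f=f and \<eta>=\<eta> and Lam=Lam and v=v and K="(Suc J)", OF hc]
  define Fc where "Fc = f (\<eta> * Lam - v)"
  define FF where "FF = f (lam - (\<eta> * Lam - v) + 2 * \<eta> * (of_nat i + of_nat J + 1))"
  define Fl1 where "Fl1 = f (lam + 2 * \<eta> * of_nat J)"
  define AA where "AA = pp f \<eta> (2 * \<eta> * of_nat (Suc J)) (Suc J)"
  define AB where "AB = pp f \<eta> (2 * \<eta> * of_nat J) J"
  define P1 where "P1 = pp f \<eta> (\<eta> * Lam - (v + 2 * \<eta>)) J"
  define Ga where "Ga = pp f \<eta> ((v + 2 * \<eta>) + lam + 2 * \<eta> * (of_nat (Suc i) + 2 * of_nat J - 1) - \<eta> * Lam) J"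
  define HH where "HH = pp f \<eta> (lam + 2 * \<eta> * (2 * of_nat J - of_nat J - 1)) J"
  have q0: "pp f \<eta> (2 * \<eta> * (of_nat (Suc J) - of_nat (Suc J))) ((Suc J) - (Suc J)) = 1"
    by simp
  have q1: "pp f \<eta> (lam + 2 * \<eta> * (of_nat i + of_nat (Suc J))) ((Suc J) - (Suc J)) = 1"
    by simp
  have q2: "pp f \<eta> (\<eta> * Lam - v) (Suc J) = Fc * P1"
    unfolding Fc_def P1_def diff_zero pp_Suc1
    by (rule arg_cong2[where f="(*)"]; (rule ppcong | rule fcong)?; simp add: algebra_simps)
  have q3: "pp f \<eta> (v + lam + 2 * \<eta> * (of_nat i + 2 * of_nat (Suc J) - 1) - \<eta> * Lam) (Suc J) = Ga * FF"
    unfolding FF_def Ga_def diff_zero pp_Suc2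
    by (rule arg_cong2[where f="(*)"]; (rule ppcong | rule fcong)?; simp add: algebra_simps)
  have q4: "pp f \<eta> (\<eta> * Lam - 2 * \<eta> * (of_nat i + of_nat (Suc J)) - v) ((Suc J) - (Suc J)) = 1"
    by simp
  have q5: "pp f \<eta> (lam + 2 * \<eta> * of_nat (Suc J)) ((Suc J) - (Suc J)) = 1"
    by simp
  have q6: "pp f \<eta> (lam + 2 * \<eta> * (2 * of_nat (Suc J) - of_nat (Suc J) - 1)) (Suc J) = Fl1 * HH"
    unfolding Fl1_def HH_def diff_zero pp_Suc1
    by (rule arg_cong2[where f="(*)"]; (rule ppcong | rule fcong)?; simp add: algebra_simps)
  have q7: "pp f \<eta> (2 * \<eta> * (of_nat J - of_nat J)) (J - J) = 1"
    by simp
  have q8: "pp f \<eta> (lam + 2 * \<eta> * (of_nat (Suc i) + of_nat J)) (J - J) = 1"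
    by simp
  have q9: "pp f \<eta> (\<eta> * Lam - 2 * \<eta> * (of_nat (Suc i) + of_nat J) - (v + 2 * \<eta>)) (J - J) = 1"
    by simp
  have q10: "pp f \<eta> (lam + 2 * \<eta> * of_nat J) (J - J) = 1"
    by simp
  have n1: "AA \<noteq> 0" unfolding AA_def
    apply (rule pp_nz) subgoal for m by (rule nzA[where m="Suc J - m"]) ((simp add: of_nat_diff; fail) | (simp add: algebra_simps of_nat_diff))+ done
  have n2: "AB \<noteq> 0" unfolding AB_def
    apply (rule pp_nz) subgoal for m by (rule nzA[where m="J - m"]) ((simp add: of_nat_diff; fail) | (simp add: algebra_simps of_nat_diff))+ done
  have n3: "Fc \<noteq> 0" unfolding Fc_def by (rule nzC[where m=0]) auto
  have n4: "P1 \<noteq> 0" unfolding P1_def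
    apply (rule pp_nz) subgoal for m by (rule nzC[where m="Suc m"]) ((simp; fail) | (simp add: algebra_simps))+ done
  have n5: "HH \<noteq> 0" unfolding HH_def
    apply (rule pp_nz) subgoal for m by (rule nzL[where t="int J - 1 - int m"]) ((simp; fail) | (simp add: algebra_simps))+ done
  have n6: "Fl1 \<noteq> 0" unfolding Fl1_def by (rule nzL[where t="int J"]) ((simp; fail) | (simp add: algebra_simps))+
  have k0: "f (v + (lam + 2 * \<eta> * (2 * of_nat J - of_nat J)) + \<eta> * (2 * of_nat i + 2 - Lam)) = FF" unfolding FF_def by (rule fcong) (simp add: algebra_simps)
  have k1: "f (lam + 2 * \<eta> * (2 * of_nat J - of_nat J)) = Fl1" unfolding Fl1_def by (rule fcong) (simp add: algebra_simps)
  show ?thesis unfolding RR_def q0 q1 q2 q3 q4 q5 q6 q7 q8 q9 q10 k0 k1 Fc_def[symmetric] AA_def[symmetric] AB_def[symmetric] P1_def[symmetric] Ga_def[symmetric] HH_def[symmetric]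
    using n1 n2 n3 n4 n5 n6 by (simp add: field_simps)
qed

lemma W1_0: "W1 f \<eta> Lam (int i) 0 (int i) 0 v L = f (\<eta> * (Lam - 2 * of_nat i) - v) * f (L + 2 * of_nat i * \<eta>) / (f (\<eta> * Lam - v) * f L)"
  unfolding W1_def by (simp add: Let_def)

lemma W1_1: "W1 f \<eta> Lam (int i) 1 (int i + 1) 0 v L = f (v + L + \<eta> * (2 * of_nat i + 2 - Lam)) * f (2 * \<eta>) / (f (\<eta> * Lam - v) * f L)"
  unfolding W1_def by (simp add: Let_def)

lemma main_RR:
  assumes gd: "good f"
  shows "(\<forall>m. 1 \<le> m \<and> m \<le> J \<longrightarrow> f (2 * \<eta> * of_nat m) \<noteq> 0) \<Longrightarrow>
    (\<forall>t::int. \<bar>t\<bar> \<le> int J \<longrightarrow> f (lam + 2 * \<eta> * of_int t) \<noteq> 0) \<Longrightarrow>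
    (\<forall>m. m < J \<longrightarrow> f (\<eta> * Lam - v - 2 * \<eta> * of_nat m) \<noteq> 0) \<Longrightarrow> n \<le> J \<Longrightarrow>
    Wc f \<eta> Lam lam J i (int n) v = RR f \<eta> Lam lam J i n v"
proof (induction J arbitrary: i n v)
  case 0
  then show ?case by (simp add: Wc_def bseqs_0 col_def RR_def)
next
  case (Suc J)
  have ha: "\<And>m. 1 \<le> m \<Longrightarrow> m \<le> Suc J \<Longrightarrow> f (2 * \<eta> * of_nat m) \<noteq> 0" using Suc.prems(1) by blast
  have hl: "\<And>t::int. \<bar>t\<bar> \<le> int (Suc J) \<Longrightarrow> f (lam + 2 * \<eta> * of_int t) \<noteq> 0" using Suc.prems(2) by blast
  have hc: "\<And>m. m < Suc J \<Longrightarrow> f (\<eta> * Lam - v - 2 * \<eta> * of_nat m) \<noteq> 0" using Suc.prems(3) by blast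
  have h1: "\<forall>m. 1 \<le> m \<and> m \<le> J \<longrightarrow> f (2 * \<eta> * of_nat m) \<noteq> 0" using ha by simp
  have h2: "\<forall>t::int. \<bar>t\<bar> \<le> int J \<longrightarrow> f (lam + 2 * \<eta> * of_int t) \<noteq> 0" using hl by simp
  have h3: "\<forall>m. m < J \<longrightarrow> f (\<eta> * Lam - (v + 2 * \<eta>) - 2 * \<eta> * of_nat m) \<noteq> 0"
  proof (intro allI impI)
    fix m assume "m < J"
    have "f (\<eta> * Lam - (v + 2 * \<eta>) - 2 * \<eta> * of_nat m) = f (\<eta> * Lam - v - 2 * \<eta> * of_nat (Suc m))"
      by (rule fcong) (simp add: algebra_simps)
    then show "f (\<eta> * Lam - (v + 2 * \<eta>) - 2 * \<eta> * of_nat m) \<noteq> 0" using hc[of "Suc m"] \<open>m < J\<close> by simp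
  qed
  note IH = Suc.IH[OF h1 h2 h3]
  have rec: "Wc f \<eta> Lam lam (Suc J) i (int n) v =
     W1 f \<eta> Lam (int i) 0 (int i) 0 v (lam + 2 * \<eta> * (2 * of_nat n - of_nat J)) * Wc f \<eta> Lam lam J i (int n) (v + 2 * \<eta>)
   + W1 f \<eta> Lam (int i) 1 (int i + 1) 0 v (lam + 2 * \<eta> * (2 * of_int (int n - 1) - of_nat J)) * Wc f \<eta> Lam lam J (Suc i) (int n - 1) (v + 2 * \<eta>)"
    using Wc_rec[of f \<eta> Lam lam J i "int n" v] by simp
  have n_le: "n \<le> Suc J" by (rule Suc.prems(4))
  consider (z) "n = 0" | (t) "n = Suc J" | (g) p r where "n = Suc p" "J = Suc p + r"
    using n_le by (metis add_Suc le_Suc_eq le_iff_add not0_implies_Suc)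
  then show ?case
  proof cases
    case z
    have e0: "Wc f \<eta> Lam lam J (Suc i) (int n - 1) (v + 2 * \<eta>) = 0"
      unfolding Wc_def using z bseqs_empty[of "int n - 1" J] by simp
    show ?thesis unfolding rec e0 IH[OF le0[of J, folded z]] W1_0
      using step_zero[OF gd, of J \<eta> lam Lam v i] ha hl hc z by simp
  next
    case t
    have e0: "Wc f \<eta> Lam lam J i (int n) (v + 2 * \<eta>) = 0"
      unfolding Wc_def using t bseqs_empty[of "int n" J] by simp
    have e1: "int n - 1 = int J" using t by simp
    show ?thesis unfolding rec e0 e1 IH[OF order_refl] W1_1
      using step_top[OF gd, of J \<eta> lam Lam v i] ha hl hc t by simp
  next
    case g
    have e1: "int n - 1 = int p" using g by simp
    have le1: "n \<le> J" "p \<le> J" using g by simp_all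
    show ?thesis unfolding rec e1 IH[OF le1(1)] IH[OF le1(2)] W1_0 W1_1
      using step_general[OF gd, of p r \<eta> lam Lam v i] ha hl hc unfolding g by simp
  qed
qed

theorem proposition4p3:
  fixes \<eta> \<tau> v lam Lam :: complex and f :: "complex \<Rightarrow> complex"
    and i J :: nat and j :: int
  assumes "Im \<tau> > 0"
    and "f = theta \<tau> \<or> f = (\<lambda>z::complex. sin (complex_of_real pi * z))"
    and "J > 0"
  shows "((j < 0 \<or> j > int J) \<longrightarrow> Wfused f \<eta> Lam J (int i) j (int i + j) 0 v lam = 0)
   \<and> ((0 \<le> j \<and> j \<le> int J
        \<and> (\<forall>m::nat. 1 \<le> m \<and> m \<le> J \<longrightarrow> f (2 * \<eta> * of_nat m) \<noteq> 0)
        \<and> (\<forall>n::int. \<bar>n\<bar> \<le> int J \<longrightarrow> f (lam + 2 * \<eta> * of_int n) \<noteq> 0)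
        \<and> (\<forall>m::nat. m < J \<longrightarrow> f (\<eta> * Lam - v - 2 * \<eta> * of_nat m) \<noteq> 0))
      \<longrightarrow> Wfused f \<eta> Lam J (int i) j (int i + j) 0 v lam
          = f (2 * \<eta>) ^ nat j
            * epoch f \<eta> (2 * \<eta> * of_nat J) (int J)
              / (epoch f \<eta> (2 * \<eta> * (of_nat J - of_int j)) (int J - j)
                 * epoch f \<eta> (2 * \<eta> * of_int j) j)
            * epoch f \<eta> (lam + 2 * \<eta> * (of_nat i + of_int j)) (int J - j)
              / epoch f \<eta> (\<eta> * Lam - v) (int J)
            * (epoch f \<eta> (v + lam + 2 * \<eta> * (of_nat i + 2 * of_int j - 1) - \<eta> * Lam) j
               * epoch f \<eta> (\<eta> * Lam - 2 * \<eta> * (of_nat i + of_int j) - v) (int J - j))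
              / (epoch f \<eta> (lam + 2 * \<eta> * of_int j) (int J - j)
                 * epoch f \<eta> (lam + 2 * \<eta> * (2 * of_int j - of_nat J - 1)) j))"
proof -
  have gd: "good f" using assms(2) good_theta[OF assms(1)] good_sin by auto
  show ?thesis
  proof (intro conjI impI)
    assume a: "j < 0 \<or> j > int J"
    show "Wfused f \<eta> Lam J (int i) j (int i + j) 0 v lam = 0" unfolding Wfused_def bseqs_empty[OF a] by simp
  next
    assume a: "0 \<le> j \<and> j \<le> int J
        \<and> (\<forall>m::nat. 1 \<le> m \<and> m \<le> J \<longrightarrow> f (2 * \<eta> * of_nat m) \<noteq> 0)
        \<and> (\<forall>n::int. \<bar>n\<bar> \<le> int J \<longrightarrow> f (lam + 2 * \<eta> * of_int n) \<noteq> 0)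
        \<and> (\<forall>m::nat. m < J \<longrightarrow> f (\<eta> * Lam - v - 2 * \<eta> * of_nat m) \<noteq> 0)"
    define n where "n = nat j"
    have jn: "j = int n" using a n_def by simp
    have le: "n \<le> J" using a jn by simp
    have e: "int J - int n = int (J - n)" using le by simp
    have W: "Wfused f \<eta> Lam J (int i) j (int i + j) 0 v lam = RR f \<eta> Lam lam J i n v"
      unfolding jn Wfused_Wc by (rule main_RR[OF gd]) (use a le in auto)
    show "Wfused f \<eta> Lam J (int i) j (int i + j) 0 v lam = f (2 * \<eta>) ^ nat j
            * epoch f \<eta> (2 * \<eta> * of_nat J) (int J)
              / (epoch f \<eta> (2 * \<eta> * (of_nat J - of_int j)) (int J - j)
                 * epoch f \<eta> (2 * \<eta> * of_int j) j)
            * epoch f \<eta> (lam + 2 * \<eta> * (of_nat i + of_int j)) (int J - j)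
              / epoch f \<eta> (\<eta> * Lam - v) (int J)
            * (epoch f \<eta> (v + lam + 2 * \<eta> * (of_nat i + 2 * of_int j - 1) - \<eta> * Lam) j
               * epoch f \<eta> (\<eta> * Lam - 2 * \<eta> * (of_nat i + of_int j) - v) (int J - j))
              / (epoch f \<eta> (lam + 2 * \<eta> * of_int j) (int J - j)
                 * epoch f \<eta> (lam + 2 * \<eta> * (2 * of_int j - of_nat J - 1)) j)"
      unfolding W unfolding jn e epoch_pp of_int_of_nat_eq nat_int RR_def by (rule refl)
  qed
qed

end
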